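(* Let $\Gamma\subseteq\mathbb N\times\mathbb N^d$ be a graded semigroup satisfying (i) linear growth and (ii) bigness. For each $k\ge1$ let $\Gamma^k\subseteq\mathbb N\times\mathbb N^d$ be a graded subsemigroup with $\Gamma^k_1=\Gamma_k$ and $\Gamma^k_r\subseteq\Gamma_{kr}$ for all $r\ge1$. Then $$k^{-d}\,\mathrm{vol}\big(\Delta(\Gamma^k)\big)\xrightarrow[k\to\infty]{}\mathrm{vol}\big(\Delta(\Gamma)\big),$$ where $\mathrm{vol}$ denotes Lebesgue measure on $\mathbb R^d$.
   Context: For a graded semigroup $\Gamma\subseteq\mathbb N\times\mathbb N^d$ (a subsemigroup containing $(0,0)$), $\Gamma_m=\{\alpha\in\mathbb N^d:(m,\alpha)\in\Gamma\}$. Linear growth: $\Gamma$ is contained in a finitely generated submonoid of $\mathbb N\times\mathbb N^d$ generated by elements of the form $(1,\beta)$. Bigness: $\Gamma$ generates $\mathbb Z^{d+1}$ as a group. The Okounkov body is $\Delta(\Gamma)=\{x\in\mathbb R^d:(1,x)\in\overline{\mathrm{Cone}}(\Gamma)\}$, where $\overline{\mathrm{Cone}}(\Gamma)$ is the closed convex cone in $\mathbb R^{d+1}$ generated by $\Gamma$; for $\Gamma$ satisfying (i)–(ii) it is a convex body (compact, convex, with nonempty interior). *)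

theory Defs
  imports "HOL-Analysis.Analysis"
begin

text \<open>Elements of N x N^d are pairs (m, alpha) with alpha :: nat^'n; d = CARD('n).\<close>

definition gadd :: "nat \<times> (nat^'n) \<Rightarrow> nat \<times> (nat^'n) \<Rightarrow> nat \<times> (nat^'n)" where
  "gadd p q = (fst p + fst q, snd p + snd q)"

definition graded_semigroup :: "(nat \<times> (nat^'n)) set \<Rightarrow> bool" where
  "graded_semigroup G \<longleftrightarrow> (0, 0) \<in> G \<and> (\<forall>p\<in>G. \<forall>q\<in>G. gadd p q \<in> G)"

definition slice :: "(nat \<times> (nat^'n)) set \<Rightarrow> nat \<Rightarrow> (nat^'n) set" where
  "slice G m = {\<alpha>. (m, \<alpha>) \<in> G}"

inductive_set monoid_gen :: "(nat \<times> (nat^'n)) set \<Rightarrow> (nat \<times> (nat^'n)) set" for S where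
  zero: "(0, 0) \<in> monoid_gen S"
| add: "x \<in> S \<Longrightarrow> y \<in> monoid_gen S \<Longrightarrow> gadd x y \<in> monoid_gen S"

definition linear_growth :: "(nat \<times> (nat^'n)) set \<Rightarrow> bool" where
  "linear_growth G \<longleftrightarrow>
     (\<exists>B :: (nat^'n) set. finite B \<and> G \<subseteq> monoid_gen ((\<lambda>\<beta>. (1, \<beta>)) ` B))"

definition int_emb :: "nat \<times> (nat^'n) \<Rightarrow> int \<times> (int^'n)" where
  "int_emb p = (int (fst p), \<chi> i. int (snd p $ i))"

definition real_emb :: "nat \<times> (nat^'n) \<Rightarrow> real \<times> (real^'n)" where
  "real_emb p = (real (fst p), \<chi> i. real (snd p $ i))"

inductive_set group_gen :: "(int \<times> (int^'n)) set \<Rightarrow> (int \<times> (int^'n)) set" for S where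
  zero: "(0, 0) \<in> group_gen S"
| gen: "x \<in> S \<Longrightarrow> x \<in> group_gen S"
| add: "x \<in> group_gen S \<Longrightarrow> y \<in> group_gen S \<Longrightarrow> (fst x + fst y, snd x + snd y) \<in> group_gen S"
| neg: "x \<in> group_gen S \<Longrightarrow> (- fst x, - snd x) \<in> group_gen S"

definition big :: "(nat \<times> (nat^'n)) set \<Rightarrow> bool" where
  "big G \<longleftrightarrow> group_gen (int_emb ` G) = UNIV"

definition closed_cone :: "(nat \<times> (nat^'n)) set \<Rightarrow> (real \<times> (real^'n)) set" where
  "closed_cone G = closure (convex_cone hull (real_emb ` G))"

definition okounkov_body :: "(nat \<times> (nat^'n)) set \<Rightarrow> (real^'n) set" where
  "okounkov_body G = {x. (1, x) \<in> closed_cone G}"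

end

theory Submission
  imports Defs
begin


definition rv :: "nat^'n \<Rightarrow> real^'n" where "rv a = (\<chi> i. real (a $ i))"

lemma rv_add: "rv (a + b) = rv a + rv b"
  by (simp add: rv_def vec_eq_iff)
lemma rv_zero[simp]: "rv 0 = 0"
  by (simp add: rv_def vec_eq_iff)
lemma real_emb_eq: "real_emb p = (real (fst p), rv (snd p))"
  by (simp add: real_emb_def rv_def)

lemma gs_add: "graded_semigroup G \<Longrightarrow> (m,a) \<in> G \<Longrightarrow> (n,b) \<in> G \<Longrightarrow> (m+n, a+b) \<in> G"
  unfolding graded_semigroup_def gadd_def by (metis fst_conv snd_conv)

lemma gs_mult:
  assumes "graded_semigroup G" "(m,a) \<in> G"
  shows "\<exists>b. (j*m, b) \<in> G \<and> rv b = real j *\<^sub>R rv a"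
proof (induction j)
  case 0 then show ?case using assms(1) by (auto simp: graded_semigroup_def)
next
  case (Suc j)
  then obtain b where b: "(j*m, b) \<in> G" "rv b = real j *\<^sub>R rv a" by blast
  have "(m + j*m, a + b) \<in> G" using gs_add[OF assms(1) assms(2) b(1)] .
  moreover have "rv (a+b) = real (Suc j) *\<^sub>R rv a" using b(2) by (simp add: rv_add algebra_simps)
  ultimately show ?case by (auto simp: algebra_simps)
qed

lemma lg_bound:
  assumes "linear_growth G"
  shows "\<exists>R::nat. \<forall>m a. (m,a) \<in> G \<longrightarrow> (\<forall>i. a $ i \<le> R * m)"
proof -
  obtain B where B: "finite B" "G \<subseteq> monoid_gen ((\<lambda>\<beta>. (1, \<beta>)) ` B)"
    using assms by (auto simp: linear_growth_def)
  define R where "R = (\<Sum>\<beta>\<in>B. \<Sum>i\<in>UNIV. \<beta> $ i)"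
  have Rb: "\<beta> $ i \<le> R" if "\<beta> \<in> B" for \<beta> i
  proof -
    have "\<beta> $ i \<le> (\<Sum>i\<in>UNIV. \<beta> $ i)" by (rule member_le_sum) auto
    also have "\<dots> \<le> R" unfolding R_def using B(1) that by (intro member_le_sum) auto
    finally show ?thesis .
  qed
  have "\<forall>i. snd x $ i \<le> R * fst x" if "x \<in> monoid_gen ((\<lambda>\<beta>. (1, \<beta>)) ` B)" for x
    using that
  proof induction
    case zero then show ?case by simp
  next
    case (add x y)
    then obtain \<beta> where "\<beta> \<in> B" "x = (1,\<beta>)" by auto
    show ?case
    proof
      fix i
      have "snd (gadd x y) $ i = \<beta> $ i + snd y $ i" using \<open>x = (1,\<beta>)\<close> by (simp add: gadd_def)
      also have "\<dots> \<le> R + R * fst y" using Rb[OF \<open>\<beta> \<in> B\<close>] add.IH by (intro add_mono) auto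
      also have "\<dots> = R * fst (gadd x y)" using \<open>x = (1,\<beta>)\<close> by (simp add: gadd_def algebra_simps)
      finally show "snd (gadd x y) $ i \<le> R * fst (gadd x y)" .
    qed
  qed
  then show ?thesis using B(2) by (metis fst_conv snd_conv subsetD)
qed

lemma lg_zero:
  assumes "linear_growth G" "(0,a) \<in> G" shows "a = 0"
proof -
  obtain R :: nat where "\<forall>m a. (m,a) \<in> G \<longrightarrow> (\<forall>i. a $ i \<le> R * m)" using lg_bound[OF assms(1)] by blast
  then show ?thesis using assms(2) unfolding vec_eq_iff by (metis mult_0_right le_zero_eq zero_index)
qed



lemma cc_def': "closed_cone G = closure (convex_cone hull (real_emb ` G))"
  by (simp add: closed_cone_def)

lemma body_closed: "closed (okounkov_body G)"
proof -
  have "okounkov_body G = (\<lambda>x. (1::real, x)) -` closed_cone G"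
    by (auto simp: okounkov_body_def)
  moreover have "closed ((\<lambda>x. (1::real, x)) -` closed_cone G)"
    by (rule continuous_closed_vimage) (auto intro!: continuous_intros simp: closed_cone_def)
  ultimately show ?thesis by simp
qed

lemma closed_cone_convex: "convex (closed_cone G)"
  by (simp add: closed_cone_def convex_closure convex_convex_cone_hull)

lemma body_convex: "convex (okounkov_body G)"
  unfolding convex_def okounkov_body_def
proof (intro allI impI ballI, clarsimp)
  fix x y :: "real^'a" and u v :: real
  assume a: "(1, x) \<in> closed_cone G" "(1, y) \<in> closed_cone G" "0 \<le> u" "0 \<le> v" "u + v = 1"
  have "u *\<^sub>R (1::real, x) + v *\<^sub>R (1, y) \<in> closed_cone G"
    using closed_cone_convex a unfolding convex_def by blast
  then show "(1, u *\<^sub>R x + v *\<^sub>R y) \<in> closed_cone G" using a(5) by simp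
qed

lemma body_bound:
  assumes "linear_growth G"
  obtains R :: nat where "okounkov_body G \<subseteq> {x. \<forall>i. 0 \<le> x$i \<and> x$i \<le> real R}"
proof -
  obtain R :: nat where R: "\<forall>m a. (m,a) \<in> G \<longrightarrow> (\<forall>i. a $ i \<le> R * m)"
    using lg_bound[OF assms] by blast
  define Q where "Q = (\<Inter>i. {p::real\<times>(real^'a). 0 \<le> snd p $ i} \<inter> {p. snd p $ i \<le> real R * fst p})"
  have Q: "p \<in> Q \<longleftrightarrow> (\<forall>i. 0 \<le> snd p $ i \<and> snd p $ i \<le> real R * fst p)" for p
    by (auto simp: Q_def)
  have "closed Q" unfolding Q_def
    by (intro closed_INT ballI closed_Int closed_Collect_le continuous_intros)
  have "convex_cone Q" unfolding convex_cone_iff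
  proof (intro conjI ballI allI impI)
    show "0 \<in> Q" by (simp add: Q)
  next
    fix x y assume x: "x \<in> Q" and y: "y \<in> Q"
    show "x + y \<in> Q" unfolding Q
    proof
      fix i
      have "snd x $ i + snd y $ i \<le> real R * fst x + real R * fst y"
        using x y by (intro add_mono) (auto simp: Q)
      then show "0 \<le> snd (x + y) $ i \<and> snd (x + y) $ i \<le> real R * fst (x + y)"
        using x y by (auto simp: Q algebra_simps)
    qed
  next
    fix x and c :: real assume x: "x \<in> Q" and c: "0 \<le> c"
    show "c *\<^sub>R x \<in> Q" unfolding Q
    proof
      fix i
      have "c * snd x $ i \<le> c * (real R * fst x)" using x c by (intro mult_left_mono) (auto simp: Q)
      then show "0 \<le> snd (c *\<^sub>R x) $ i \<and> snd (c *\<^sub>R x) $ i \<le> real R * fst (c *\<^sub>R x)"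
        using x c by (auto simp: Q algebra_simps)
    qed
  qed
  have "real_emb ` G \<subseteq> Q"
  proof
    fix p assume "p \<in> real_emb ` G"
    then obtain m a where ma: "(m,a) \<in> G" "p = real_emb (m,a)" by auto
    then have "a $ i \<le> R * m" for i using R by blast
    then have "real (a $ i) \<le> real R * real m" for i by (metis of_nat_le_iff of_nat_mult)
    then show "p \<in> Q" using ma by (simp add: Q real_emb_def)
  qed
  then have "convex_cone hull (real_emb ` G) \<subseteq> Q" using \<open>convex_cone Q\<close> by (rule hull_minimal)
  then have "closed_cone G \<subseteq> Q" unfolding closed_cone_def using \<open>closed Q\<close> by (rule closure_minimal)
  then have "okounkov_body G \<subseteq> {x. \<forall>i. 0 \<le> x$i \<and> x$i \<le> real R}"
    by (auto simp: okounkov_body_def Q)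
  then show ?thesis using that by blast
qed

lemma box_bounded: "bounded {x::real^'a. \<forall>i. 0 \<le> x$i \<and> x$i \<le> c}"
proof -
  have "{x::real^'a. \<forall>i. 0 \<le> x$i \<and> x$i \<le> c} \<subseteq> cbox 0 (\<chi> i. c)"
    by (auto simp: mem_box_cart)
  then show ?thesis by (meson bounded_cbox bounded_subset)
qed

lemma body_compact: "linear_growth G \<Longrightarrow> compact (okounkov_body G)"
proof -
  assume "linear_growth G"
  then obtain R where "okounkov_body G \<subseteq> {x. \<forall>i. 0 \<le> x$i \<and> x$i \<le> real R}" by (rule body_bound)
  then have "bounded (okounkov_body G)" using box_bounded bounded_subset by blast
  then show ?thesis using body_closed compact_eq_bounded_closed by blast
qed

lemma body_upper:
  assumes k: "k \<ge> (1::nat)" and sl: "\<And>r. slice H r \<subseteq> slice G (k * r)"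
  shows "okounkov_body H \<subseteq> (\<lambda>x. real k *\<^sub>R x) ` okounkov_body G"
proof -
  define f where "f = (\<lambda>p::real\<times>(real^'a). (fst p, (1 / real k) *\<^sub>R snd p))"
  have lin: "linear f" unfolding f_def by (intro linearI) (auto simp: algebra_simps)
  define A where "A = f -` closed_cone G"
  have "closed A" unfolding A_def closed_cone_def f_def
    by (intro continuous_closed_vimage) (auto intro!: continuous_intros)
  have cc: "convex_cone (convex_cone hull (real_emb ` G))" by (rule convex_cone_convex_cone_hull)
  have ccl: "convex_cone (closed_cone G)"
  proof -
    have 1: "conic (closure (convex_cone hull (real_emb ` G)))" by (rule conic_closure[OF conic_convex_cone_hull])
    have 2: "convex (closure (convex_cone hull (real_emb ` G)))" by (rule convex_closure[OF convex_convex_cone_hull])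
    have 3: "closure (convex_cone hull (real_emb ` G)) \<noteq> {}"
      using closure_subset convex_cone_hull_contains_0 by fastforce
    show ?thesis using 1 2 3 by (simp add: convex_cone_def closed_cone_def)
  qed
  have "convex_cone A" unfolding A_def convex_cone_iff
  proof (intro conjI ballI allI impI)
    show "0 \<in> f -` closed_cone G" using ccl lin by (simp add: convex_cone_iff linear_0)
  next
    fix x y assume "x \<in> f -` closed_cone G" "y \<in> f -` closed_cone G"
    then show "x + y \<in> f -` closed_cone G" using ccl lin by (simp add: convex_cone_iff linear_add)
  next
    fix x and c :: real assume "x \<in> f -` closed_cone G" "0 \<le> c"
    then show "c *\<^sub>R x \<in> f -` closed_cone G" using ccl lin by (simp add: convex_cone_iff linear_cmul)
  qed
  have "real_emb ` H \<subseteq> A"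
  proof
    fix p assume "p \<in> real_emb ` H"
    then obtain r a where ra: "(r,a) \<in> H" "p = real_emb (r,a)" by auto
    then have "(k*r, a) \<in> G" using sl[of r] by (auto simp: slice_def)
    then have "real_emb (k*r,a) \<in> convex_cone hull (real_emb ` G)" by (simp add: hull_inc)
    then have "(1 / real k) *\<^sub>R real_emb (k*r,a) \<in> convex_cone hull (real_emb ` G)"
      using cc by (simp add: convex_cone_scaleR)
    moreover have "(1 / real k) *\<^sub>R real_emb (k*r,a) = f p" using ra k
      by (simp add: f_def real_emb_eq)
    ultimately show "p \<in> A" unfolding A_def closed_cone_def using closure_subset by auto
  qed
  then have "convex_cone hull (real_emb ` H) \<subseteq> A" using \<open>convex_cone A\<close> by (rule hull_minimal)
  then have "closed_cone H \<subseteq> A" unfolding closed_cone_def using \<open>closed A\<close> by (rule closure_minimal)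
  show ?thesis
  proof
    fix x assume "x \<in> okounkov_body H"
    then have "f (1, x) \<in> closed_cone G" using \<open>closed_cone H \<subseteq> A\<close> by (auto simp: okounkov_body_def A_def)
    then have "(1 / real k) *\<^sub>R x \<in> okounkov_body G" by (simp add: f_def okounkov_body_def)
    moreover have "x = real k *\<^sub>R ((1 / real k) *\<^sub>R x)" using k by simp
    ultimately show "x \<in> (\<lambda>x. real k *\<^sub>R x) ` okounkov_body G" by blast
  qed
qed

lemma body_lower:
  assumes "graded_semigroup H" "slice H 1 = slice G k"
  shows "convex hull (rv ` slice G k) \<subseteq> okounkov_body H"
proof (rule hull_minimal)
  show "convex (okounkov_body H)" by (rule body_convex)
  show "rv ` slice G k \<subseteq> okounkov_body H"
  proof
    fix x assume "x \<in> rv ` slice G k"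
    then obtain a where "(1,a) \<in> H" "x = rv a" using assms(2) by (auto simp: slice_def)
    then have "real_emb (1,a) \<in> convex_cone hull (real_emb ` H)" by (simp add: hull_inc)
    then show "x \<in> okounkov_body H" using \<open>x = rv a\<close> closure_subset
      by (auto simp: okounkov_body_def closed_cone_def real_emb_eq)
  qed
qed



definition Sset :: "(nat \<times> (nat^'n)) set \<Rightarrow> (real^'n) set" where
  "Sset G = {(1 / real m) *\<^sub>R rv a | m a. (m, a) \<in> G \<and> m \<ge> 1}"

lemma key_hull:
  assumes lg: "linear_growth G" and tin: "(t, y) \<in> convex hull (real_emb ` G)" and t: "t > 0"
  shows "(1 / t) *\<^sub>R y \<in> convex hull (Sset G)"
proof -
  obtain T u where T: "finite T" "T \<subseteq> real_emb ` G" "\<forall>x\<in>T. 0 \<le> u x" "sum u T = 1"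
    "(\<Sum>v\<in>T. u v *\<^sub>R v) = (t, y)"
    using tin unfolding convex_hull_explicit by blast
  have tsum: "t = (\<Sum>v\<in>T. u v * fst v)"
    using arg_cong[OF T(5), of fst] by (simp add: fst_sum)
  have ysum: "y = (\<Sum>v\<in>T. u v *\<^sub>R snd v)"
    using arg_cong[OF T(5), of snd] by (simp add: snd_sum)
  have vprop: "0 \<le> fst v \<and> (fst v = 0 \<longrightarrow> snd v = 0) \<and> (fst v \<noteq> 0 \<longrightarrow> (1 / fst v) *\<^sub>R snd v \<in> Sset G)"
    if vT: "v \<in> T" for v
  proof -
    obtain m a where ma: "(m,a) \<in> G" "v = real_emb (m,a)" using T(2) vT by fastforce
    have 1: "fst v = real m" "snd v = rv a" using ma by (simp_all add: real_emb_eq)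
    show ?thesis
    proof (intro conjI impI)
      show "0 \<le> fst v" using 1 by simp
    next
      assume "fst v = 0" then have "m = 0" using 1 by simp
      then have "a = 0" using lg_zero[OF lg] ma by simp
      then show "snd v = 0" using 1 by simp
    next
      assume "fst v \<noteq> 0" then have "m \<ge> 1" using 1 by simp
      then show "(1 / fst v) *\<^sub>R snd v \<in> Sset G" using ma 1 unfolding Sset_def by auto
    qed
  qed
  define T' where "T' = {v\<in>T. fst v \<noteq> 0}"
  have T'sub: "T' \<subseteq> T" and fT': "finite T'" using T(1) by (auto simp: T'_def)
  define w where "w v = u v * fst v / t" for v
  have wsum: "(\<Sum>v\<in>T'. w v) = 1"
  proof -
    have "(\<Sum>v\<in>T'. w v) = (\<Sum>v\<in>T. w v)"
      by (rule sum.mono_neutral_left[OF T(1) T'sub]) (auto simp: T'_def w_def)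
    also have "\<dots> = (\<Sum>v\<in>T. u v * fst v) / t" by (simp add: w_def sum_divide_distrib)
    also have "\<dots> = 1" using tsum t by simp
    finally show ?thesis .
  qed
  have wnn: "0 \<le> w v" if "v \<in> T'" for v
  proof -
    have vT: "v \<in> T" using that T'sub by auto
    then have "0 \<le> u v" "0 \<le> fst v" using T(3) vprop by auto
    then show ?thesis using t by (simp add: w_def)
  qed
  have "(\<Sum>v\<in>T'. w v *\<^sub>R ((1 / fst v) *\<^sub>R snd v)) \<in> convex hull (Sset G)"
    by (rule convex_sum[OF fT' convex_convex_hull wsum wnn])
       (use vprop T'sub in \<open>auto simp: T'_def intro: hull_inc\<close>)
  moreover have "(\<Sum>v\<in>T'. w v *\<^sub>R ((1 / fst v) *\<^sub>R snd v)) = (1 / t) *\<^sub>R y"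
  proof -
    have "(\<Sum>v\<in>T'. w v *\<^sub>R ((1 / fst v) *\<^sub>R snd v)) = (\<Sum>v\<in>T'. (1/t) *\<^sub>R (u v *\<^sub>R snd v))"
      by (rule sum.cong) (auto simp: T'_def w_def)
    also have "\<dots> = (\<Sum>v\<in>T. (1/t) *\<^sub>R (u v *\<^sub>R snd v))"
      by (rule sum.mono_neutral_left[OF T(1) T'sub]) (use vprop in \<open>auto simp: T'_def\<close>)
    also have "\<dots> = (1 / t) *\<^sub>R y" by (simp add: ysum scaleR_sum_right)
    finally show ?thesis .
  qed
  ultimately show ?thesis by simp
qed

lemma body_sub_closure:
  assumes lg: "linear_growth G"
  shows "okounkov_body G \<subseteq> closure (convex hull (Sset G))"
proof
  fix x assume "x \<in> okounkov_body G"
  then have "(1, x) \<in> closure (convex_cone hull (real_emb ` G))"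
    by (simp add: okounkov_body_def closed_cone_def)
  then obtain p where p: "\<And>n. p n \<in> convex_cone hull (real_emb ` G)" "p \<longlonglongrightarrow> (1, x)"
    unfolding closure_sequential by blast
  have f1: "(\<lambda>n. fst (p n)) \<longlonglongrightarrow> 1" using tendsto_fst[OF p(2)] by simp
  have s1: "(\<lambda>n. snd (p n)) \<longlonglongrightarrow> x" using tendsto_snd[OF p(2)] by simp
  have ev: "eventually (\<lambda>n. fst (p n) > 0) sequentially"
    using order_tendstoD(1)[OF f1, of 0] by simp
  have lim: "(\<lambda>n. (1 / fst (p n)) *\<^sub>R snd (p n)) \<longlonglongrightarrow> (1 / 1) *\<^sub>R x"
    by (intro tendsto_intros f1 s1) simp
  have "eventually (\<lambda>n. (1 / fst (p n)) *\<^sub>R snd (p n) \<in> closure (convex hull (Sset G))) sequentially"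
    using ev
  proof eventually_elim
    case (elim n)
    have "p n \<in> insert 0 (\<Union>z \<in> convex hull (real_emb ` G). \<Union>c\<in>{0..}. {c *\<^sub>R z})"
      using p(1)[of n] by (simp add: convex_cone_hull_convex_hull)
    moreover have "p n \<noteq> 0" using elim by auto
    ultimately obtain z c where zc: "z \<in> convex hull (real_emb ` G)" "c \<ge> 0" "p n = c *\<^sub>R z" by auto
    obtain t y where z: "z = (t, y)" by (cases z)
    have ct: "c * t > 0" using elim zc z by simp
    then have "c > 0" "t > 0" using zc(2) by (auto simp: zero_less_mult_iff)
    have "(1 / t) *\<^sub>R y \<in> convex hull (Sset G)" using key_hull[OF lg] zc z \<open>t > 0\<close> by blast
    moreover have "(1 / fst (p n)) *\<^sub>R snd (p n) = (1 / t) *\<^sub>R y"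
      using zc z \<open>c > 0\<close> by simp
    ultimately show ?case using closure_subset by auto
  qed
  then show "x \<in> closure (convex hull (Sset G))"
    using Lim_in_closed_set[OF closed_closure _ trivial_limit_sequentially] lim by auto
qed



lemma Sset_box:
  assumes lg: "linear_growth G"
  obtains R :: real where "convex hull (Sset G) \<subseteq> cbox 0 (\<chi> i. R)"
proof -
  obtain R :: nat where R: "\<forall>m a. (m,a) \<in> G \<longrightarrow> (\<forall>i. a $ i \<le> R * m)"
    using lg_bound[OF lg] by blast
  have "Sset G \<subseteq> cbox 0 (\<chi> i. real R)"
  proof
    fix x assume "x \<in> Sset G"
    then obtain m a where ma: "(m,a) \<in> G" "m \<ge> 1" "x = (1 / real m) *\<^sub>R rv a"
      unfolding Sset_def by blast
    show "x \<in> cbox 0 (\<chi> i. real R)" unfolding mem_box_cart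
    proof
      fix i
      have "a $ i \<le> R * m" using R ma by blast
      then have "real (a $ i) \<le> real R * real m" by (metis of_nat_le_iff of_nat_mult)
      then have "real (a $ i) / real m \<le> real R" using ma(2) by (simp add: divide_le_eq)
      then show "0 $ i \<le> x $ i \<and> x $ i \<le> (\<chi> i. real R) $ i"
        using ma by (simp add: rv_def)
    qed
  qed
  then have "convex hull (Sset G) \<subseteq> cbox 0 (\<chi> i. real R)"
    by (intro hull_minimal convex_box)
  then show ?thesis using that by blast
qed

lemma Sset_countable: "countable (Sset G)"
proof -
  have "Sset G \<subseteq> (\<lambda>p. (1 / real (fst p)) *\<^sub>R rv (snd p)) ` UNIV"
  proof
    fix x assume "x \<in> Sset G"
    then obtain m a where "x = (1 / real m) *\<^sub>R rv a" unfolding Sset_def by blast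
    then show "x \<in> (\<lambda>p. (1 / real (fst p)) *\<^sub>R rv (snd p)) ` UNIV"
      using rangeI[of "\<lambda>p. (1 / real (fst p)) *\<^sub>R rv (snd p)" "(m,a)"] by simp
  qed
  then show ?thesis by (rule countable_subset) simp
qed

lemma approx:
  assumes lg: "linear_growth G" and e: "e > 0"
  shows "\<exists>F. finite F \<and> F \<subseteq> Sset G \<and>
           measure lebesgue (okounkov_body G) - e < measure lebesgue (convex hull F)"
proof -
  let ?S = "Sset G"
  obtain R where box: "convex hull ?S \<subseteq> cbox 0 (\<chi> i. R)" using Sset_box[OF lg] by blast
  have bdd: "bounded (convex hull ?S)" using box bounded_cbox bounded_subset by blast
  have cl_cpt: "compact (closure (convex hull ?S))" using bdd
    by (simp add: compact_closure)
  have Dsub: "okounkov_body G \<subseteq> closure (convex hull ?S)" by (rule body_sub_closure[OF lg])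
  show ?thesis
  proof (cases "?S = {}")
    case True
    then have "okounkov_body G = {}" using Dsub by simp
    then show ?thesis using True e by (intro exI[of _ "{}"]) simp
  next
    case False
    define en where "en = from_nat_into ?S"
    have range: "range en = ?S" unfolding en_def by (rule range_from_nat_into[OF False Sset_countable])
    define A where "A n = convex hull (en ` {..n})" for n
    have Acpt: "compact (A n)" for n unfolding A_def
      by (intro compact_convex_hull finite_imp_compact) simp
    have Asets: "A n \<in> sets lebesgue" for n using lmeasurable_compact[OF Acpt] by blast
    have inc: "incseq A" unfolding A_def incseq_def
      by (intro allI impI hull_mono image_mono) auto
    have UA: "(\<Union>n. A n) = convex hull ?S"
    proof
      show "(\<Union>n. A n) \<subseteq> convex hull ?S" unfolding A_def
        using range by (intro UN_least hull_mono) auto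
    next
      show "convex hull ?S \<subseteq> (\<Union>n. A n)"
      proof
        fix y assume "y \<in> convex hull ?S"
        then obtain T u where T: "finite T" "T \<subseteq> ?S" "\<forall>x\<in>T. 0 \<le> u x" "sum u T = 1"
          "(\<Sum>v\<in>T. u v *\<^sub>R v) = y"
          unfolding convex_hull_explicit by blast
        obtain C where C: "C \<subseteq> UNIV" "finite C" "T = en ` C"
          using finite_subset_image[OF T(1), of en UNIV] T(2) range by auto
        obtain N where N: "C \<subseteq> {..N}" using C(2) finite_nat_iff_bounded_le by blast
        have "y \<in> convex hull T" unfolding convex_hull_explicit using T by blast
        also have "\<dots> \<subseteq> A N" unfolding A_def using C N by (intro hull_mono) auto
        finally show "y \<in> (\<Union>n. A n)" by blast
      qed
    qed
    have Usets: "(\<Union>n. A n) \<in> sets lebesgue" using Asets by auto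
    have "emeasure lebesgue (convex hull ?S) < \<infinity>"
      using bounded_set_imp_lmeasurable[OF bdd] Usets UA by (simp add: fmeasurable_def)
    then have fin: "emeasure lebesgue (\<Union>n. A n) \<noteq> \<infinity>" using UA by simp
    have rng: "range A \<subseteq> sets lebesgue" using Asets by auto
    have lim: "(\<lambda>n. measure lebesgue (A n)) \<longlonglongrightarrow> measure lebesgue (convex hull ?S)"
      using Lim_measure_incseq[OF rng inc fin] UA by simp
    have "measure lebesgue (okounkov_body G) \<le> measure lebesgue (closure (convex hull ?S))"
      using measure_mono_fmeasurable[OF Dsub fmeasurableD[OF lmeasurable_compact[OF body_compact[OF lg]]]
        lmeasurable_compact[OF cl_cpt]] .
    also have "\<dots> = measure lebesgue (convex hull ?S)"
    proof -
      have "frontier (convex hull ?S) \<in> null_sets lebesgue"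
        using negligible_convex_frontier[OF convex_convex_hull] negligible_iff_null_sets by blast
      moreover have "convex hull ?S \<in> sets lebesgue" using Usets UA by simp
      ultimately show ?thesis
        by (simp only: closure_Un_frontier measure_Un_null_set)
    qed
    finally have le: "measure lebesgue (okounkov_body G) \<le> measure lebesgue (convex hull ?S)" .
    have "eventually (\<lambda>n. measure lebesgue (A n) > measure lebesgue (convex hull ?S) - e) sequentially"
      using order_tendstoD(1)[OF lim, of "measure lebesgue (convex hull ?S) - e"] e by simp
    then obtain n where n: "measure lebesgue (A n) > measure lebesgue (convex hull ?S) - e"
      unfolding eventually_sequentially by blast
    have "finite (en ` {..n})" by simp
    moreover have "en ` {..n} \<subseteq> ?S" using range by auto
    moreover have "measure lebesgue (okounkov_body G) - e < measure lebesgue (convex hull (en ` {..n}))"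
      using n le unfolding A_def by linarith
    ultimately show ?thesis by blast
  qed
qed



lemma degs_mult:
  assumes gs: "graded_semigroup G" and "\<exists>a. (x, a) \<in> G"
  shows "\<exists>a. (n * x, a) \<in> G"
proof (induction n)
  case 0 then show ?case using gs by (auto simp: graded_semigroup_def)
next
  case (Suc n)
  then obtain b where "(n*x, b) \<in> G" by blast
  moreover obtain a where "(x, a) \<in> G" using assms(2) by blast
  ultimately have "(x + n*x, a + b) \<in> G" using gs_add[OF gs] by blast
  then show ?case by auto
qed

lemma big_degrees:
  assumes gs: "graded_semigroup G" and bg: "big G"
  shows "\<exists>N. \<forall>s\<ge>N. \<exists>a. (s, a) \<in> G"
proof -
  define D where "D = {m. \<exists>a. (m, a) \<in> G}"
  have D0: "0 \<in> D" using gs by (auto simp: D_def graded_semigroup_def)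
  have Dadd: "x + y \<in> D" if "x \<in> D" "y \<in> D" for x y
    using that gs_add[OF gs] unfolding D_def by blast
  have Dmult: "n * x \<in> D" if "x \<in> D" for n x
    using that degs_mult[OF gs] by (auto simp: D_def)
  have "\<exists>a\<in>D. \<exists>b\<in>D. fst x = int a - int b" if "x \<in> group_gen (int_emb ` G)" for x
    using that
  proof induction
    case zero then show ?case using D0 by force
  next
    case (gen x)
    then obtain m a where "(m,a) \<in> G" "x = int_emb (m,a)" by auto
    then show ?case using D0 by (intro bexI[of _ m] bexI[of _ 0]) (auto simp: D_def int_emb_def)
  next
    case (add x y)
    then obtain a1 b1 a2 b2 where "a1 \<in> D" "b1 \<in> D" "a2 \<in> D" "b2 \<in> D"
      "fst x = int a1 - int b1" "fst y = int a2 - int b2" by blast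
    then show ?case using Dadd by (intro bexI[of _ "a1+a2"] bexI[of _ "b1+b2"]) auto
  next
    case (neg x)
    then obtain a b where "a \<in> D" "b \<in> D" "fst x = int a - int b" by blast
    then show ?case by (intro bexI[of _ b] bexI[of _ a]) auto
  qed
  moreover have "(1, 0) \<in> group_gen (int_emb ` G)" using bg by (simp add: big_def)
  ultimately obtain a b where ab: "a \<in> D" "b \<in> D" "(1::int) = int a - int b" by force
  then have a: "a = b + 1" by simp
  have "s \<in> D" if s: "s \<ge> b * b" for s
  proof (cases "b = 0")
    case True
    then have "a = 1" using a by simp
    then show ?thesis using Dmult[OF ab(1), of s] by simp
  next
    case False
    define q where "q = s div b"
    define r where "r = s mod b"
    have sqr: "s = q * b + r" by (simp add: q_def r_def)
    have "r < b" using False by (simp add: r_def)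
    have "q \<ge> b"
    proof (rule ccontr)
      assume "\<not> b \<le> q"
      then have "q * b + r < b * b" using \<open>r < b\<close>
        by (metis add_lessD1 div_less_iff_less_mult not_le q_def sqr that False bot_nat_0.not_eq_extremum)
      then show False using s sqr by linarith
    qed
    have "s = (q - r) * b + r * a" using sqr a \<open>q \<ge> b\<close> \<open>r < b\<close>
      by (simp add: algebra_simps diff_mult_distrib)
    then show ?thesis using Dadd Dmult ab by metis
  qed
  then show ?thesis by (auto simp: D_def)
qed



lemma meas_aff:
  "measure lebesgue ((\<lambda>x. c *\<^sub>R x + d) ` (S::(real^'n) set)) = \<bar>c\<bar> ^ CARD('n) * measure lebesgue S"
  using measure_lebesgue_affine[of c d S] by simp

lemma mb: "measure lborel (okounkov_body X) = measure lebesgue (okounkov_body X)"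
  by (simp add: borel_closed body_closed)

lemma upper:
  assumes lg: "linear_growth G" and k: "k \<ge> (1::nat)" and sl: "\<And>r. slice H r \<subseteq> slice G (k * r)"
  shows "compact (okounkov_body H)"
    and "measure lebesgue (okounkov_body H) \<le> real k ^ CARD('n) * measure lebesgue (okounkov_body (G::(nat \<times> (nat^'n)) set))"
proof -
  have sub: "okounkov_body H \<subseteq> (\<lambda>x. real k *\<^sub>R x + 0) ` okounkov_body G"
    using body_upper[OF k sl] by simp
  have cpt: "compact ((\<lambda>x. real k *\<^sub>R x + 0) ` okounkov_body G)"
    using body_compact[OF lg] by (simp add: compact_scaling)
  then show cH: "compact (okounkov_body H)"
    using sub body_closed bounded_subset compact_eq_bounded_closed by blast
  have "measure lebesgue (okounkov_body H) \<le> measure lebesgue ((\<lambda>x. real k *\<^sub>R x + 0) ` okounkov_body G)"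
    by (rule measure_mono_fmeasurable[OF sub fmeasurableD[OF lmeasurable_compact[OF cH]] lmeasurable_compact[OF cpt]])
  also have "\<dots> = real k ^ CARD('n) * measure lebesgue (okounkov_body G)" by (simp only: meas_aff)
  finally show "measure lebesgue (okounkov_body H) \<le> real k ^ CARD('n) * measure lebesgue (okounkov_body G)" .
qed



lemma lower_ev:
  fixes \<Gamma> :: "(nat \<times> (nat^'n)) set"
    and \<Gamma>s :: "nat \<Rightarrow> (nat \<times> (nat^'n)) set"
  assumes gs: "graded_semigroup \<Gamma>"
    and lg: "linear_growth \<Gamma>"
    and bg: "big \<Gamma>"
    and h1: "\<And>k. k \<ge> 1 \<Longrightarrow> graded_semigroup (\<Gamma>s k)"
    and h2: "\<And>k. k \<ge> 1 \<Longrightarrow> slice (\<Gamma>s k) 1 = slice \<Gamma> k"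
    and h3: "\<And>k r. k \<ge> 1 \<Longrightarrow> slice (\<Gamma>s k) r \<subseteq> slice \<Gamma> (k * r)"
    and e: "e > 0"
  shows "eventually (\<lambda>k. measure lebesgue (okounkov_body \<Gamma>) - e <
            measure lebesgue (okounkov_body (\<Gamma>s k)) / real k ^ CARD('n)) sequentially"
proof -
  let ?L = "measure lebesgue (okounkov_body \<Gamma>)"
  let ?d = "CARD('n)"
  obtain F where F: "finite F" "F \<subseteq> Sset \<Gamma>" "?L - e/2 < measure lebesgue (convex hull F)"
    using approx[OF lg, of "e/2"] e by auto
  define V where "V = measure lebesgue (convex hull F)"
  have nonneg: "0 \<le> measure lebesgue (okounkov_body (\<Gamma>s k)) / real k ^ ?d" for k by simp
  show ?thesis
  proof (cases "F = {}")
    case True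
    then have "?L - e < 0" using F(3) e by simp
    then show ?thesis using nonneg by (intro always_eventually allI) (meson less_le_trans)
  next
    case False
    have "\<forall>p\<in>F. \<exists>ma. (fst ma, snd ma) \<in> \<Gamma> \<and> fst ma \<ge> 1 \<and> p = (1 / real (fst ma)) *\<^sub>R rv (snd ma)"
      using F(2) unfolding Sset_def by force
    then obtain g where g: "\<And>p. p \<in> F \<Longrightarrow> (fst (g p), snd (g p)) \<in> \<Gamma> \<and> fst (g p) \<ge> 1 \<and>
        p = (1 / real (fst (g p))) *\<^sub>R rv (snd (g p))"
      by metis
    define M where "M = (\<Prod>p\<in>F. fst (g p))"
    have M1: "M \<ge> 1" unfolding M_def using g by (metis (no_types, lifting) F(1) One_nat_def prod_ge_1)
    have "\<exists>\<beta>. (M, \<beta>) \<in> \<Gamma> \<and> rv \<beta> = real M *\<^sub>R p" if p: "p \<in> F" for p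
    proof -
      have "fst (g p) dvd M" unfolding M_def using F(1) p by (rule dvd_prod_eqI) simp
      then obtain j where j: "M = j * fst (g p)" by (metis dvd_def mult.commute)
      obtain b where b: "(j * fst (g p), b) \<in> \<Gamma>" "rv b = real j *\<^sub>R rv (snd (g p))"
        using gs_mult[OF gs, of "fst (g p)" "snd (g p)" j] g[OF p] by blast
      have "rv (snd (g p)) = real (fst (g p)) *\<^sub>R p"
      proof -
        define m where "m = fst (g p)"
        define v where "v = rv (snd (g p))"
        have "p = (1/real m) *\<^sub>R v" "m \<ge> 1" using g[OF p] by (auto simp: m_def v_def)
        then have "real m *\<^sub>R p = v" by simp
        then show ?thesis by (simp add: m_def v_def)
      qed
      then have "rv b = real M *\<^sub>R p" using b(2) j by simp
      then show ?thesis using b(1) j by auto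
    qed
    then obtain \<beta> where \<beta>: "\<And>p. p \<in> F \<Longrightarrow> (M, \<beta> p) \<in> \<Gamma> \<and> rv (\<beta> p) = real M *\<^sub>R p"
      by metis
    obtain N where N: "\<forall>s\<ge>N. \<exists>a. (s, a) \<in> \<Gamma>" using big_degrees[OF gs bg] by blast
    define h where "h k = (1 - real (N + M) / real k) ^ ?d * V" for k
    have hlim: "h \<longlonglongrightarrow> (1 - 0) ^ ?d * V" unfolding h_def by (intro tendsto_intros)
    have "V - e/2 < (1 - 0) ^ ?d * V" using e by simp
    then have evh: "eventually (\<lambda>k. V - e/2 < h k) sequentially"
      using order_tendstoD(1)[OF hlim] by blast
    have evb: "eventually (\<lambda>k. h k \<le> measure lebesgue (okounkov_body (\<Gamma>s k)) / real k ^ ?d) sequentially"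
      unfolding eventually_sequentially
    proof (intro exI[of _ "N + M"] allI impI)
      fix k assume k: "k \<ge> N + M"
      then have k1: "k \<ge> 1" using M1 by simp
      define s where "s = N + (k - N) mod M"
      define q where "q = (k - N) div M"
      have kqs: "k = q * M + s" using k by (simp add: s_def q_def)
      have "s < N + M" using M1 by (simp add: s_def)
      then have qM: "real (q * M) \<ge> real k - real (N + M)" using kqs by simp
      have "s \<ge> N" by (simp add: s_def)
      then obtain \<gamma> where \<gamma>: "(s, \<gamma>) \<in> \<Gamma>" using N by blast
      have img: "(\<lambda>x. real (q*M) *\<^sub>R x + rv \<gamma>) ` F \<subseteq> rv ` slice \<Gamma> k"
      proof
        fix y assume "y \<in> (\<lambda>x. real (q*M) *\<^sub>R x + rv \<gamma>) ` F"
        then obtain p where p: "p \<in> F" "y = real (q*M) *\<^sub>R p + rv \<gamma>" by blast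
        obtain \<delta> where \<delta>: "(q * M, \<delta>) \<in> \<Gamma>" "rv \<delta> = real q *\<^sub>R rv (\<beta> p)"
          using gs_mult[OF gs, of M "\<beta> p" q] \<beta>[OF p(1)] by blast
        have "(q * M + s, \<delta> + \<gamma>) \<in> \<Gamma>" using gs_add[OF gs \<delta>(1) \<gamma>] .
        moreover have "rv (\<delta> + \<gamma>) = y" using p \<delta>(2) \<beta>[OF p(1)] by (simp add: rv_add)
        ultimately show "y \<in> rv ` slice \<Gamma> k" using kqs by (auto simp: slice_def)
      qed
      have "(\<lambda>x. real (q*M) *\<^sub>R x + rv \<gamma>) ` (convex hull F) = convex hull ((\<lambda>x. real (q*M) *\<^sub>R x + rv \<gamma>) ` F)"
        using convex_hull_affinity[of "rv \<gamma>" "real (q*M)" F] by (simp add: add.commute)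
      also have "\<dots> \<subseteq> convex hull (rv ` slice \<Gamma> k)" using img by (rule hull_mono)
      also have "\<dots> \<subseteq> okounkov_body (\<Gamma>s k)" by (rule body_lower[OF h1[OF k1] h2[OF k1]])
      finally have sub: "(\<lambda>x. real (q*M) *\<^sub>R x + rv \<gamma>) ` (convex hull F) \<subseteq> okounkov_body (\<Gamma>s k)" .
      have cF: "compact (convex hull F)" using F(1) by (intro compact_convex_hull finite_imp_compact)
      have cimg: "compact ((\<lambda>x. real (q*M) *\<^sub>R x + rv \<gamma>) ` (convex hull F))"
        using cF by (intro compact_continuous_image continuous_intros)
      have cH: "compact (okounkov_body (\<Gamma>s k))"
        using upper(1)[OF lg k1 h3[OF k1]] .
      have "real (q*M) ^ ?d * V \<le> measure lebesgue (okounkov_body (\<Gamma>s k))"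
        using measure_mono_fmeasurable[OF sub fmeasurableD[OF lmeasurable_compact[OF cimg]] lmeasurable_compact[OF cH]]
        by (simp add: meas_aff V_def)
      moreover have "h k \<le> real (q*M) ^ ?d * V / real k ^ ?d"
      proof -
        have kpos: "real k > 0" using k1 by simp
        have "0 \<le> 1 - real (N + M) / real k" using k kpos by (simp add: field_simps)
        moreover have "1 - real (N + M) / real k \<le> real (q*M) / real k"
        proof -
          have "1 - real (N+M) / real k = (real k - real (N+M)) / real k" using kpos by (simp add: field_simps)
          also have "\<dots> \<le> real (q*M) / real k" using qM kpos by (intro divide_right_mono) auto
          finally show ?thesis .
        qed
        ultimately have "(1 - real (N + M) / real k) ^ ?d \<le> (real (q*M) / real k) ^ ?d"
          by (intro power_mono) auto
        then have "h k \<le> (real (q*M) / real k) ^ ?d * V"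
          unfolding h_def V_def by (intro mult_right_mono) auto
        also have "\<dots> = real (q*M) ^ ?d * V / real k ^ ?d" by (simp add: power_divide)
        finally show ?thesis .
      qed
      ultimately show "h k \<le> measure lebesgue (okounkov_body (\<Gamma>s k)) / real k ^ ?d"
        by (smt (verit) divide_right_mono zero_le_power of_nat_0_le_iff)
    qed
    show ?thesis using evh evb
    proof eventually_elim
      case (elim k) then show ?case using F(3) V_def by linarith
    qed
  qed
qed


theorem lemma4p2:
  fixes \<Gamma> :: "(nat \<times> (nat^'n)) set"
    and \<Gamma>s :: "nat \<Rightarrow> (nat \<times> (nat^'n)) set"
  assumes "graded_semigroup \<Gamma>"
    and "linear_growth \<Gamma>"
    and "big \<Gamma>"
    and "\<And>k. k \<ge> 1 \<Longrightarrow> graded_semigroup (\<Gamma>s k)"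
    and "\<And>k. k \<ge> 1 \<Longrightarrow> slice (\<Gamma>s k) 1 = slice \<Gamma> k"
    and "\<And>k r. k \<ge> 1 \<Longrightarrow> slice (\<Gamma>s k) r \<subseteq> slice \<Gamma> (k * r)"
  shows "(\<lambda>k. measure lborel (okounkov_body (\<Gamma>s k)) / real k ^ CARD('n))
           \<longlonglongrightarrow> measure lborel (okounkov_body \<Gamma>)"
  unfolding mb
proof (rule tendstoI)
  fix e :: real assume e: "e > 0"
  let ?L = "measure lebesgue (okounkov_body \<Gamma>)"
  let ?f = "\<lambda>k. measure lebesgue (okounkov_body (\<Gamma>s k)) / real k ^ CARD('n)"
  have ev1: "eventually (\<lambda>k. ?L - e < ?f k) sequentially"
    by (rule lower_ev[OF assms e])
  have ev2: "eventually (\<lambda>k. ?f k \<le> ?L) sequentially"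
    unfolding eventually_sequentially
  proof (intro exI[of _ 1] allI impI)
    fix k :: nat assume k: "k \<ge> 1"
    have "measure lebesgue (okounkov_body (\<Gamma>s k)) \<le> real k ^ CARD('n) * ?L"
      by (rule upper(2)[OF assms(2) k assms(6)[OF k]])
    moreover have "real k ^ CARD('n) > 0" using k by simp
    ultimately show "?f k \<le> ?L" by (simp add: divide_le_eq mult.commute)
  qed
  show "eventually (\<lambda>k. dist (?f k) ?L < e) sequentially"
    using ev1 ev2
  proof eventually_elim
    case (elim k) then show ?case by (simp add: dist_real_def abs_if)
  qed
qed

end
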